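(* Let $n\ge4$, $r_1,r_2\in\mathbb{Z}_+$ with $r_1+r_2=n-1$, and let $-1<\alpha_1<1$, $0\le\alpha_2,\alpha_3<1$ with $\alpha_1+\alpha_2+\alpha_3=1$ and $r_1+\alpha_1\ge r_2+\alpha_2$. Then $$\mathfrak{L}_n(r_1,r_2,0,\alpha_1,\alpha_2,\alpha_3)\le \mathfrak{L}_n(r_1+r_2,0,0,\alpha_1,\alpha_2,\alpha_3)+2^{r_2+2}+1-r_2+2^{r_2+1}\ln n.$$
   Context: Points of a triangle are identified with barycentric coordinates $\lambda=(\lambda_1,\lambda_2,\lambda_3)$, $\lambda_r\ge0$, $\sum\lambda_r=1$. For an integer $n\ge1$ let $I=\{i=(i_1,i_2,i_3)\in\mathbb{Z}_+^3: i_1+i_2+i_3=n\}$, and let $l_i(\lambda)=\prod_{s=1}^{3}\frac{1}{i_s!}\prod_{t=0}^{i_s-1}(n\lambda_s-t)$ (the Lagrange fundamental polynomials for the equally spaced nodes $i/n$, $i\in I$). The Lebesgue function is $\mathcal{L}_n(\lambda)=\sum_{i\in I}|l_i(\lambda)|$. For $r_s\in\mathbb{Z}_+$ with $r_1+r_2+r_3=n-1$ and reals $\alpha_s$ with $\alpha_1+\alpha_2+\alpha_3=1$, write $\mathfrak{L}_n(r_1,r_2,r_3,\alpha_1,\alpha_2,\alpha_3)=\mathcal{L}_n(\lambda)$ where $\lambda_s=(r_s+\alpha_s)/n$, $s=1,2,3$. *)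

theory Defs
  imports Complex_Main
begin

definition idx :: "nat \<Rightarrow> (nat \<times> nat \<times> nat) set" where
  "idx n = {(i1, i2, i3). i1 + i2 + i3 = n}"

definition lfac :: "nat \<Rightarrow> nat \<Rightarrow> real \<Rightarrow> real" where
  "lfac n k x = (1 / fact k) * (\<Prod>t<k. real n * x - real t)"

text \<open>Lagrange fundamental polynomial l_i at barycentric point (x1,x2,x3).\<close>
definition lagr :: "nat \<Rightarrow> nat \<times> nat \<times> nat \<Rightarrow> real \<times> real \<times> real \<Rightarrow> real" where
  "lagr n i lam = (case i of (i1, i2, i3) \<Rightarrow> case lam of (x1, x2, x3) \<Rightarrow>
      lfac n i1 x1 * lfac n i2 x2 * lfac n i3 x3)"

definition lebesgue :: "nat \<Rightarrow> real \<times> real \<times> real \<Rightarrow> real" where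
  "lebesgue n lam = (\<Sum>i\<in>idx n. \<bar>lagr n i lam\<bar>)"

definition frakL :: "nat \<Rightarrow> nat \<Rightarrow> nat \<Rightarrow> nat \<Rightarrow> real \<Rightarrow> real \<Rightarrow> real \<Rightarrow> real" where
  "frakL n r1 r2 r3 a1 a2 a3 =
     lebesgue n ((real r1 + a1) / real n, (real r2 + a2) / real n, (real r3 + a3) / real n)"

end

theory Submission
  imports Defs
begin

lemma gch_Suc: "(a::real) gchoose Suc k = (a gchoose k) * (a - of_nat k) / of_nat (Suc k)"
proof -
  have "fact (Suc k) * (a gchoose Suc k) = (\<Prod>i = 0..<Suc k. a - of_nat i)"
    by (rule gbinomial_mult_fact)
  also have "\<dots> = (\<Prod>i = 0..<k. a - of_nat i) * (a - of_nat k)"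
    by simp
  also have "\<dots> = fact k * (a gchoose k) * (a - of_nat k)"
    by (simp add: gbinomial_mult_fact)
  finally have "fact (Suc k) * (a gchoose Suc k) = fact k * (a gchoose k) * (a - of_nat k)" .
  then have "fact k * (of_nat (Suc k) * (a gchoose Suc k)) = fact k * ((a gchoose k) * (a - of_nat k))"
    by (simp only: fact_Suc of_nat_mult mult_ac)
  then have "of_nat (Suc k) * (a gchoose Suc k) = (a gchoose k) * (a - of_nat k)"
    by simp
  then show ?thesis
    by (simp add: field_simps del: of_nat_Suc)
qed

lemma lfac_eq: "n > 0 \<Longrightarrow> lfac n k (x / real n) = x gchoose k"
  by (simp add: lfac_def gbinomial_prod_rev lessThan_atLeast0)

lemma finite_idx: "finite (idx n)"
proof -
  have "idx n \<subseteq> {..n} \<times> {..n} \<times> {..n}" by (auto simp: idx_def)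
  then show ?thesis by (rule finite_subset) auto
qed

lemma frakL_eq:
  assumes "n > 0"
  shows "frakL n r1 r2 r3 a1 a2 a3 = (\<Sum>i\<in>idx n. case i of (i1,i2,i3) \<Rightarrow>
      \<bar>((real r1 + a1) gchoose i1) * ((real r2 + a2) gchoose i2) * ((real r3 + a3) gchoose i3)\<bar>)"
  unfolding frakL_def lebesgue_def
  by (rule sum.cong) (auto simp: lagr_def lfac_eq assms)

lemma idx_shift2:
  "(\<Sum>i\<in>idx (Suc m). case i of (i1,i2,i3) \<Rightarrow> if i2 = 0 then 0 else (f (i1, i2 - 1, i3)::real))
   = (\<Sum>j\<in>idx m. f j)"
proof -
  let ?h = "\<lambda>(j1::nat,j2::nat,j3::nat). (j1, Suc j2, j3)"
  let ?g = "\<lambda>i. case i of (i1,i2,i3) \<Rightarrow> if i2 = 0 then 0 else (f (i1, i2 - 1, i3)::real)"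
  have inj: "inj_on ?h (idx m)" by (auto simp: inj_on_def)
  have sub: "?h ` idx m \<subseteq> idx (Suc m)" by (auto simp: idx_def)
  have "(\<Sum>i\<in>idx (Suc m). ?g i) = (\<Sum>i\<in>?h ` idx m. ?g i)"
  proof (rule sum.mono_neutral_right[OF finite_idx sub])
    show "\<forall>i\<in>idx (Suc m) - ?h ` idx m. ?g i = 0"
    proof
      fix i assume i: "i \<in> idx (Suc m) - ?h ` idx m"
      obtain i1 i2 i3 where e: "i = (i1,i2,i3)" by (cases i) auto
      show "?g i = 0"
      proof (cases i2)
        case (Suc k)
        then have "(i1,k,i3) \<in> idx m" using i e by (auto simp: idx_def)
        then have "i \<in> ?h ` idx m" using e Suc by force
        then show ?thesis using i by blast
      qed (simp add: e)
    qed
  qed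
  also have "\<dots> = (\<Sum>j\<in>idx m. ?g (?h j))" by (simp only: sum.reindex[OF inj] o_def)
  also have "\<dots> = (\<Sum>j\<in>idx m. f j)" by (rule sum.cong) auto
  finally show ?thesis .
qed

lemma idx_shift1:
  "(\<Sum>i\<in>idx (Suc m). case i of (i1,i2,i3) \<Rightarrow> if i1 = 0 then 0 else (f (i1 - 1, i2, i3)::real))
   = (\<Sum>j\<in>idx m. f j)"
proof -
  let ?h = "\<lambda>(j1::nat,j2::nat,j3::nat). (Suc j1, j2, j3)"
  let ?g = "\<lambda>i. case i of (i1,i2,i3) \<Rightarrow> if i1 = 0 then 0 else (f (i1 - 1, i2, i3)::real)"
  have inj: "inj_on ?h (idx m)" by (auto simp: inj_on_def)
  have sub: "?h ` idx m \<subseteq> idx (Suc m)" by (auto simp: idx_def)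
  have "(\<Sum>i\<in>idx (Suc m). ?g i) = (\<Sum>i\<in>?h ` idx m. ?g i)"
  proof (rule sum.mono_neutral_right[OF finite_idx sub])
    show "\<forall>i\<in>idx (Suc m) - ?h ` idx m. ?g i = 0"
    proof
      fix i assume i: "i \<in> idx (Suc m) - ?h ` idx m"
      obtain i1 i2 i3 where e: "i = (i1,i2,i3)" by (cases i) auto
      show "?g i = 0"
      proof (cases i1)
        case (Suc k)
        then have "(k,i2,i3) \<in> idx m" using i e by (auto simp: idx_def)
        then have "i \<in> ?h ` idx m" using e Suc by force
        then show ?thesis using i by blast
      qed (simp add: e)
    qed
  qed
  also have "\<dots> = (\<Sum>j\<in>idx m. ?g (?h j))" by (simp only: sum.reindex[OF inj] o_def)
  also have "\<dots> = (\<Sum>j\<in>idx m. f j)" by (rule sum.cong) auto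
  finally show ?thesis .
qed

definition DD :: "real \<Rightarrow> nat \<Rightarrow> real" where
  "DD x i = (if i = 0 then 0 else x gchoose (i - 1))"

lemma pascal: "(x + 1) gchoose i = (x gchoose i) + DD x i"
  by (cases i) (auto simp: DD_def gbinomial_Suc_Suc)

lemma termb:
  "\<bar>u gchoose i\<bar> + \<bar>DD u i\<bar> \<le> \<bar>(u + 1) gchoose i\<bar> + 2 * (if u + 1 < real i then \<bar>u gchoose i\<bar> else 0)"
proof (cases i)
  case 0 then show ?thesis by (simp add: DD_def)
next
  case (Suc k)
  show ?thesis
  proof (cases "u + 1 < real i")
    case True
    have "\<bar>DD u i\<bar> \<le> \<bar>(u + 1) gchoose i\<bar> + \<bar>u gchoose i\<bar>"
      unfolding pascal by linarith
    then show ?thesis using True by simp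
  next
    case False
    then have t0: "u - real k \<ge> 0" using Suc by simp
    define t where "t = (u - real k) / real (Suc k)"
    define X where "X = u gchoose k"
    have nn: "t \<ge> 0" using t0 by (simp add: t_def)
    have e: "u gchoose i = X * t"
      using Suc gch_Suc[of u k] by (simp add: t_def X_def)
    have d: "DD u i = X" using Suc by (simp add: DD_def X_def)
    have "\<bar>(u + 1) gchoose i\<bar> = \<bar>X * (t + 1)\<bar>"
      unfolding pascal e d by (simp add: algebra_simps)
    also have "\<dots> = \<bar>X\<bar> * t + \<bar>X\<bar>"
    proof -
      have "\<bar>t + 1\<bar> = t + 1" using nn by simp
      then show ?thesis unfolding abs_mult by (simp add: algebra_simps)
    qed
    also have "\<dots> = \<bar>u gchoose i\<bar> + \<bar>DD u i\<bar>"
      using nn by (simp add: e d abs_mult)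
    finally show ?thesis using False by simp
  qed
qed

lemma step:
  fixes u v :: real and c :: "nat \<Rightarrow> real"
  shows "(\<Sum>i\<in>idx (Suc m). case i of (i1,i2,i3) \<Rightarrow> \<bar>(u gchoose i1) * ((v + 1) gchoose i2) * c i3\<bar>)
    \<le> (\<Sum>i\<in>idx (Suc m). case i of (i1,i2,i3) \<Rightarrow> \<bar>((u + 1) gchoose i1) * (v gchoose i2) * c i3\<bar>)
      + 2 * (\<Sum>i\<in>idx (Suc m). case i of (i1,i2,i3) \<Rightarrow>
          (if u + 1 < real i1 then \<bar>(u gchoose i1) * (v gchoose i2) * c i3\<bar> else 0))"
proof -
  let ?f = "\<lambda>j. case j of (j1,j2,j3) \<Rightarrow> \<bar>(u gchoose j1) * (v gchoose j2) * c j3\<bar>"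
  have A: "(\<Sum>i\<in>idx (Suc m). case i of (i1,i2,i3) \<Rightarrow> \<bar>(u gchoose i1) * ((v + 1) gchoose i2) * c i3\<bar>)
     \<le> (\<Sum>i\<in>idx (Suc m). ?f i) + (\<Sum>i\<in>idx (Suc m). case i of (i1,i2,i3) \<Rightarrow> \<bar>(u gchoose i1) * DD v i2 * c i3\<bar>)"
    unfolding sum.distrib[symmetric]
  proof (rule sum_mono)
    fix i :: "nat \<times> nat \<times> nat"
    obtain i1 i2 i3 where e: "i = (i1,i2,i3)" by (cases i) auto
    have "\<bar>(u gchoose i1) * ((v + 1) gchoose i2) * c i3\<bar>
       = \<bar>(u gchoose i1) * ((v gchoose i2) + DD v i2) * c i3\<bar>"
      by (simp only: pascal)
    also have "\<dots> = \<bar>(u gchoose i1) * (v gchoose i2) * c i3 + (u gchoose i1) * DD v i2 * c i3\<bar>"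
      by (simp only: ring_distribs)
    also have "\<dots> \<le> \<bar>(u gchoose i1) * (v gchoose i2) * c i3\<bar> + \<bar>(u gchoose i1) * DD v i2 * c i3\<bar>"
      by (rule abs_triangle_ineq)
    finally show "(case i of (i1,i2,i3) \<Rightarrow> \<bar>(u gchoose i1) * ((v + 1) gchoose i2) * c i3\<bar>)
      \<le> ?f i + (case i of (i1,i2,i3) \<Rightarrow> \<bar>(u gchoose i1) * DD v i2 * c i3\<bar>)"
      using e by simp
  qed
  have B1: "(\<Sum>i\<in>idx (Suc m). case i of (i1,i2,i3) \<Rightarrow> \<bar>(u gchoose i1) * DD v i2 * c i3\<bar>)
      = (\<Sum>j\<in>idx m. ?f j)"
    unfolding idx_shift2[of ?f m, symmetric]
    by (rule sum.cong) (auto simp: DD_def)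
  have B2: "(\<Sum>i\<in>idx (Suc m). case i of (i1,i2,i3) \<Rightarrow> \<bar>DD u i1 * (v gchoose i2) * c i3\<bar>)
      = (\<Sum>j\<in>idx m. ?f j)"
    unfolding idx_shift1[of ?f m, symmetric]
    by (rule sum.cong) (auto simp: DD_def)
  have C: "(\<Sum>i\<in>idx (Suc m). ?f i) + (\<Sum>i\<in>idx (Suc m). case i of (i1,i2,i3) \<Rightarrow> \<bar>DD u i1 * (v gchoose i2) * c i3\<bar>)
    \<le> (\<Sum>i\<in>idx (Suc m). case i of (i1,i2,i3) \<Rightarrow> \<bar>((u + 1) gchoose i1) * (v gchoose i2) * c i3\<bar>)
      + 2 * (\<Sum>i\<in>idx (Suc m). case i of (i1,i2,i3) \<Rightarrow>
          (if u + 1 < real i1 then \<bar>(u gchoose i1) * (v gchoose i2) * c i3\<bar> else 0))"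
    unfolding sum.distrib[symmetric] sum_distrib_left
  proof (rule sum_mono)
    fix i :: "nat \<times> nat \<times> nat"
    obtain i1 i2 i3 where e: "i = (i1,i2,i3)" by (cases i) auto
    have nn: "\<bar>(v gchoose i2) * c i3\<bar> \<ge> 0" by simp
    have "(\<bar>u gchoose i1\<bar> + \<bar>DD u i1\<bar>) * \<bar>(v gchoose i2) * c i3\<bar>
       \<le> (\<bar>(u + 1) gchoose i1\<bar> + 2 * (if u + 1 < real i1 then \<bar>u gchoose i1\<bar> else 0)) * \<bar>(v gchoose i2) * c i3\<bar>"
      by (rule mult_right_mono[OF termb nn])
    moreover have "?f i + (case i of (i1,i2,i3) \<Rightarrow> \<bar>DD u i1 * (v gchoose i2) * c i3\<bar>)
       = (\<bar>u gchoose i1\<bar> + \<bar>DD u i1\<bar>) * \<bar>(v gchoose i2) * c i3\<bar>"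
      using e by (simp add: abs_mult algebra_simps)
    moreover have "(case i of (i1,i2,i3) \<Rightarrow> \<bar>((u + 1) gchoose i1) * (v gchoose i2) * c i3\<bar>)
       + 2 * (case i of (i1,i2,i3) \<Rightarrow>
          (if u + 1 < real i1 then \<bar>(u gchoose i1) * (v gchoose i2) * c i3\<bar> else 0))
       = (\<bar>(u + 1) gchoose i1\<bar> + 2 * (if u + 1 < real i1 then \<bar>u gchoose i1\<bar> else 0)) * \<bar>(v gchoose i2) * c i3\<bar>"
      using e by (simp add: abs_mult algebra_simps)
    ultimately show "?f i + (case i of (i1,i2,i3) \<Rightarrow> \<bar>DD u i1 * (v gchoose i2) * c i3\<bar>)
      \<le> (case i of (i1,i2,i3) \<Rightarrow> \<bar>((u + 1) gchoose i1) * (v gchoose i2) * c i3\<bar>)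
       + 2 * (case i of (i1,i2,i3) \<Rightarrow>
          (if u + 1 < real i1 then \<bar>(u gchoose i1) * (v gchoose i2) * c i3\<bar> else 0))"
      by linarith
  qed
  show ?thesis using A B1 B2 C by linarith
qed

lemma gch_le_binom:
  fixes x :: real
  assumes "x \<le> real N" "j \<le> N" "real j - 1 \<le> x"
  shows "0 \<le> x gchoose j \<and> x gchoose j \<le> real (N choose j)"
proof -
  have f: "\<And>i. i \<in> {0..<j} \<Longrightarrow> 0 \<le> x - real i \<and> x - real i \<le> real N - real i"
    using assms by auto
  have p0: "0 \<le> (\<Prod>i = 0..<j. x - real i)" by (rule prod_nonneg) (use f in blast)
  have p1: "(\<Prod>i = 0..<j. x - real i) \<le> (\<Prod>i = 0..<j. real N - real i)"
    by (rule prod_mono) (use f in blast)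
  have g: "x gchoose j = (\<Prod>i = 0..<j. x - real i) / fact j"
    by (simp add: gbinomial_prod_rev)
  have h: "real (N choose j) = (\<Prod>i = 0..<j. real N - real i) / fact j"
    by (simp add: binomial_gbinomial gbinomial_prod_rev)
  show ?thesis unfolding g h using p0 p1 by (simp add: divide_right_mono)
qed

lemma gch_abs_le1:
  fixes x :: real
  assumes "0 \<le> x" "x \<le> 1"
  shows "\<bar>x gchoose k\<bar> \<le> 1"
proof (induction k)
  case 0 then show ?case by simp
next
  case (Suc k)
  have a: "\<bar>x - real k\<bar> / real (Suc k) \<le> 1" using assms by (auto simp: abs_if)
  have "\<bar>x gchoose Suc k\<bar> = \<bar>x gchoose k\<bar> * (\<bar>x - real k\<bar> / real (Suc k))"
    by (simp add: gch_Suc abs_mult abs_divide del: of_nat_Suc)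
  also have "\<dots> \<le> 1 * 1"
    by (rule mult_mono) (use Suc a in auto)
  finally show ?case by simp
qed

lemma gch_tail:
  fixes u :: real
  assumes "real P \<le> u" "u < real P + 1" "P \<ge> 1"
  shows "\<bar>u gchoose (P + 2 + m)\<bar> \<le> 2 / ((real m + 2) * (real m + 3))"
proof (induction m)
  case 0
  have b: "\<bar>u gchoose (P + 1)\<bar> \<le> 1"
    using gch_le_binom[of u "P+1" "P+1"] assms by auto
  have c: "\<bar>u - real (P + 1)\<bar> / real (Suc (P + 1)) \<le> 1 / 3"
    using assms by (auto simp: field_simps)
  have "\<bar>u gchoose (P + 2 + 0)\<bar> = \<bar>u gchoose (P + 1)\<bar> * (\<bar>u - real (P + 1)\<bar> / real (Suc (P + 1)))"
    using gch_Suc[of u "P+1"] by (simp add: abs_mult abs_divide del: of_nat_Suc of_nat_add)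
  also have "\<dots> \<le> 1 * (1/3)"
    by (rule mult_mono) (use b c in auto)
  finally show ?case by simp
next
  case (Suc m)
  let ?i = "P + 2 + m"
  have r1: "\<bar>u - real ?i\<bar> \<le> real m + 2" using assms by auto
  have r2: "real m + 4 \<le> real (Suc ?i)" using assms by auto
  have r: "\<bar>u - real ?i\<bar> / real (Suc ?i) \<le> (real m + 2) / (real m + 4)"
    by (rule frac_le) (use r1 r2 in auto)
  have "\<bar>u gchoose (P + 2 + Suc m)\<bar> = \<bar>u gchoose ?i\<bar> * (\<bar>u - real ?i\<bar> / real (Suc ?i))"
    using gch_Suc[of u ?i] by (simp add: abs_mult abs_divide del: of_nat_Suc of_nat_add)
  also have "\<dots> \<le> (2 / ((real m + 2) * (real m + 3))) * ((real m + 2) / (real m + 4))"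
    by (rule mult_mono) (use Suc r in auto)
  also have "\<dots> = 2 / ((real m + 3) * (real m + 4))"
    by (simp add: divide_simps)
  also have "\<dots> = 2 / ((real (Suc m) + 2) * (real (Suc m) + 3))"
    by (simp add: add_ac)
  finally show ?case .
qed

lemma tail_sum: "(\<Sum>m<M. 2 / ((real m + 2) * (real m + 3))) = 1 - 2 / (real M + 2)"
proof (induction M)
  case 0 then show ?case by simp
next
  case (Suc M)
  have "(\<Sum>m<Suc M. 2 / ((real m + 2) * (real m + 3))) = (1 - 2 / (real M + 2)) + 2 / ((real M + 2) * (real M + 3))"
    using Suc by simp
  also have "\<dots> = 1 - 2 / (real M + 3)"
    by (simp add: divide_simps) (simp add: algebra_simps)
  also have "\<dots> = 1 - 2 / (real (Suc M) + 2)"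
    by (simp add: add_ac)
  finally show ?case .
qed

lemma Ebound:
  fixes u v a3 :: real and P q n :: nat
  assumes "real P \<le> u" "u < real P + 1" "P \<ge> 1" "real q \<le> v" "v < real q + 1"
    "0 \<le> a3" "a3 < 1" "real n = u + v + 1 + a3"
  shows "(\<Sum>i\<in>idx n. case i of (i1,i2,i3) \<Rightarrow>
     (if u + 1 < real i1 then \<bar>(u gchoose i1) * (v gchoose i2) * (a3 gchoose i3)\<bar> else 0)) \<le> 2^(q+1)"
proof -
  define W :: "nat \<Rightarrow> real" where "W m = 2 / ((real m + 2) * (real m + 3))" for m
  define H :: "nat \<times> nat \<Rightarrow> real" where "H p = W (fst p) * real ((q+1) choose (snd p))" for p
  define F where "F i = (case i of (i1,i2,i3) \<Rightarrow>
     (if u + 1 < real i1 then \<bar>(u gchoose i1) * (v gchoose i2) * (a3 gchoose i3)\<bar> else 0))" for i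
  define S where "S = {i \<in> idx n. u + 1 < real (fst i)}"
  define \<pi> where "\<pi> i = (fst i - P - 2, fst (snd i))" for i :: "nat \<times> nat \<times> nat"
  have Hnn: "H p \<ge> 0" for p by (simp add: H_def W_def)
  have finS: "finite S" unfolding S_def using finite_idx by simp
  have keyS: "fst i \<ge> P + 2 \<and> fst (snd i) \<le> q + 1 \<and> fst i \<le> n" if "i \<in> S" for i
  proof -
    obtain i1 i2 i3 where e: "i = (i1,i2,i3)" by (cases i) auto
    have s: "i1 + i2 + i3 = n" "u + 1 < real i1" using that e by (auto simp: S_def idx_def)
    then have "real i1 + real i2 + real i3 = real n" by (metis of_nat_add)
    then have "real i2 < real q + 2" using s assms by linarith
    moreover have "real i1 > real P + 1" using s assms by linarith
    ultimately show ?thesis using e s by auto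
  qed
  have "(\<Sum>i\<in>idx n. F i) = (\<Sum>i\<in>S. F i)"
    by (rule sum.mono_neutral_right[OF finite_idx]) (auto simp: S_def F_def split: if_splits)
  also have "\<dots> \<le> (\<Sum>i\<in>S. H (\<pi> i))"
  proof (rule sum_mono)
    fix i assume iS: "i \<in> S"
    obtain i1 i2 i3 where e: "i = (i1,i2,i3)" by (cases i) auto
    from keyS[OF iS] e have k: "i1 \<ge> P + 2" "i2 \<le> q + 1" by auto
    have c1: "\<bar>u gchoose i1\<bar> \<le> W (i1 - P - 2)"
    proof -
      have ii: "P + 2 + (i1 - P - 2) = i1" using k by simp
      show ?thesis using gch_tail[OF assms(1-3), of "i1 - P - 2"] unfolding ii W_def .
    qed
    have c2: "\<bar>v gchoose i2\<bar> \<le> real ((q+1) choose i2)"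
      using gch_le_binom[of v "q+1" i2] assms k by auto
    have c3: "\<bar>a3 gchoose i3\<bar> \<le> 1" using gch_abs_le1 assms by auto
    have "\<bar>(u gchoose i1) * (v gchoose i2) * (a3 gchoose i3)\<bar>
       = \<bar>u gchoose i1\<bar> * \<bar>v gchoose i2\<bar> * \<bar>a3 gchoose i3\<bar>" by (simp add: abs_mult)
    also have "\<dots> \<le> W (i1 - P - 2) * real ((q+1) choose i2) * 1"
      by (intro mult_mono c1 c2 c3) (auto simp: W_def)
    moreover have "u + 1 < real i1" using iS e by (simp add: S_def)
    ultimately show "F i \<le> H (\<pi> i)" using e by (simp add: F_def H_def \<pi>_def)
  qed
  also have "\<dots> = (\<Sum>p\<in>\<pi> ` S. H p)"
  proof -
    have "inj_on \<pi> S"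
    proof (rule inj_onI)
      fix x y assume xy: "x \<in> S" "y \<in> S" "\<pi> x = \<pi> y"
      obtain x1 x2 x3 where ex: "x = (x1,x2,x3)" by (cases x) auto
      obtain y1 y2 y3 where ey: "y = (y1,y2,y3)" by (cases y) auto
      have "x1 \<ge> P + 2" "y1 \<ge> P + 2" using keyS xy ex ey by auto
      moreover have "x1 + x2 + x3 = n" "y1 + y2 + y3 = n" using xy ex ey by (auto simp: S_def idx_def)
      ultimately show "x = y" using xy(3) ex ey by (auto simp: \<pi>_def)
    qed
    then show ?thesis by (simp add: sum.reindex)
  qed
  also have "\<dots> \<le> (\<Sum>p\<in>{..<n} \<times> {..q+1}. H p)"
  proof (rule sum_mono2)
    show "\<pi> ` S \<subseteq> {..<n} \<times> {..q+1}" using keyS by (force simp: \<pi>_def)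
  qed (auto simp: Hnn)
  also have "\<dots> = (\<Sum>m<n. W m) * (\<Sum>j\<le>q+1. real ((q+1) choose j))"
  proof -
    have "(\<Sum>m<n. W m) * (\<Sum>j\<le>q+1. real ((q+1) choose j)) = (\<Sum>m<n. \<Sum>j\<le>q+1. W m * real ((q+1) choose j))"
      by (rule sum_product)
    also have "\<dots> = (\<Sum>(m,j)\<in>{..<n} \<times> {..q+1}. W m * real ((q+1) choose j))"
      by (rule sum.cartesian_product)
    also have "\<dots> = (\<Sum>p\<in>{..<n} \<times> {..q+1}. H p)"
      by (simp add: H_def case_prod_beta)
    finally show ?thesis by simp
  qed
  also have "\<dots> \<le> 1 * 2^(q+1)"
  proof (rule mult_mono)
    show "(\<Sum>m<n. W m) \<le> 1" unfolding W_def tail_sum by simp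
    have "(\<Sum>j\<le>q+1. real ((q+1) choose j)) = real (\<Sum>j\<le>q+1. (q+1) choose j)" by simp
    also have "\<dots> = 2^(q+1)" by (simp only: choose_row_sum) simp
    finally show "(\<Sum>j\<le>q+1. real ((q+1) choose j)) \<le> 2^(q+1)" by simp
    show "0 \<le> (\<Sum>j\<le>q+1. real ((q+1) choose j))" by (rule sum_nonneg) simp
  qed (auto simp: W_def)
  finally show ?thesis by (simp add: F_def)
qed

theorem lemma16:
  fixes n r1 r2 :: nat and a1 a2 a3 :: real
  assumes "n \<ge> 4" and "r1 + r2 = n - 1"
    and "-1 < a1" and "a1 < 1"
    and "0 \<le> a2" and "a2 < 1" and "0 \<le> a3" and "a3 < 1"
    and "a1 + a2 + a3 = 1"
    and "real r1 + a1 \<ge> real r2 + a2"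
  shows "frakL n r1 r2 0 a1 a2 a3
    \<le> frakL n (r1 + r2) 0 0 a1 a2 a3 + 2 ^ (r2 + 2) + 1 - real r2 + 2 ^ (r2 + 1) * ln (real n)"
proof -
  define x1 where "x1 = real r1 + a1"
  define x2 where "x2 = real r2 + a2"
  define G where "G k = (\<Sum>i\<in>idx n. case i of (i1,i2,i3) \<Rightarrow>
      \<bar>((x1 + real k) gchoose i1) * ((x2 - real k) gchoose i2) * (a3 gchoose i3)\<bar>)" for k :: nat
  obtain m where nm: "n = Suc m" using assms(1) by (cases n) auto
  have rn: "real r1 + real r2 + 1 = real n" using assms(1,2) by linarith
  have r1ge: "r1 \<ge> 2"
  proof (rule ccontr)
    assume "\<not> r1 \<ge> 2"
    then have "r1 \<le> 1" by simp
    moreover then have "r2 \<ge> 2" using assms(1,2) by linarith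
    ultimately have "real r1 \<le> 1" "real r2 \<ge> 2" by simp_all
    then show False using assms(4,5,10) by linarith
  qed
  have stepk: "G k \<le> G (Suc k) + 2 * 2 ^ (r2 - k)" if k: "k < r2" for k
  proof -
    have e1: "x1 + real k + 1 = x1 + real (Suc k)" by simp
    have e2: "x2 - real k - 1 = x2 - real (Suc k)" by simp
    have e3: "x2 - real (Suc k) + 1 = x2 - real k" by simp
    note st = step[of "x1 + real k" "x2 - real k - 1" "\<lambda>i. a3 gchoose i" m, unfolded e1 e2, unfolded e3, folded nm]
    define P where "P = (if a1 \<ge> 0 then r1 + k else r1 + k - 1)"
    have P1: "real P \<le> x1 + real k" "x1 + real k < real P + 1" "P \<ge> 1"
      using r1ge assms(3,4) by (auto simp: P_def x1_def)
    have Q: "real (r2 - k - 1) \<le> x2 - real (Suc k)" "x2 - real (Suc k) < real (r2 - k - 1) + 1"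
      using k assms(5,6) by (auto simp: x2_def of_nat_diff)
    have N: "real n = (x1 + real k) + (x2 - real (Suc k)) + 1 + a3"
      using rn assms(9) by (simp add: x1_def x2_def)
    note eb = Ebound[OF P1 Q assms(7,8) N]
    have "r2 - k - 1 + 1 = r2 - k" using k by simp
    then have eb': "(\<Sum>i\<in>idx n. case i of (i1,i2,i3) \<Rightarrow>
     (if x1 + real k + 1 < real i1 then \<bar>((x1 + real k) gchoose i1) * ((x2 - real (Suc k)) gchoose i2) * (a3 gchoose i3)\<bar> else 0)) \<le> 2^(r2 - k)"
      using eb by simp
    show ?thesis using st eb' unfolding G_def e1 by linarith
  qed
  have ind: "G 0 \<le> G k + 2^(r2+2) - 2^(r2 - k + 2)" if "k \<le> r2" for k
    using that
  proof (induction k)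
    case 0 then show ?case by simp
  next
    case (Suc k)
    have a: "r2 - k = Suc (r2 - Suc k)" using Suc.prems by simp
    have "G 0 \<le> G k + 2^(r2+2) - 2^(r2 - k + 2)" using Suc by simp
    also have "\<dots> \<le> G (Suc k) + 2 * 2 ^ (r2 - k) + 2^(r2+2) - 2^(r2 - k + 2)"
      using stepk[of k] Suc.prems by simp
    also have "\<dots> = G (Suc k) + 2^(r2+2) - 2^(r2 - Suc k + 2)"
      unfolding a by simp
    finally show ?case .
  qed
  have n0: "n > 0" using assms(1) by simp
  have "G 0 \<le> G r2 + 2^(r2+2) - 4" using ind[of r2] by simp
  moreover have "G 0 = frakL n r1 r2 0 a1 a2 a3"
    unfolding frakL_eq[OF n0] G_def x1_def x2_def
    by (rule sum.cong) auto
  moreover have "G r2 = frakL n (r1 + r2) 0 0 a1 a2 a3"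
    unfolding frakL_eq[OF n0] G_def x1_def x2_def
    by (rule sum.cong) (auto simp: algebra_simps)
  moreover have "real r2 \<le> 5 + 2 ^ (r2 + 1) * ln (real n)"
  proof -
    have l: "1 \<le> ln (real n)"
    proof -
      have "exp 1 \<le> real n" using exp_le assms(1) by linarith
      then show ?thesis using assms(1) by (subst ln_ge_iff) auto
    qed
    have "r2 \<le> 2 ^ (r2 + 1)"
      using less_exp[of "r2 + 1"] by simp
    then have "real r2 \<le> real (2 ^ (r2 + 1))" by (simp only: of_nat_le_iff)
    then have "real r2 \<le> 2 ^ (r2 + 1)" by simp
    also have "\<dots> \<le> 2 ^ (r2 + 1) * ln (real n)" using l by simp
    finally show ?thesis by simp
  qed
  ultimately show ?thesis by linarith
qed

end
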